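(* Let $H$ be a self-adjoint operator on a $2^L$-dimensional Hilbert space whose eigenvalues, counted with multiplicity, are $E_{\boldsymbol n}=E_0+\sum_{k=1}^Ln_k\Lambda_k$, $\boldsymbol n\in\{0,1\}^L$, with real $E_0,\Lambda_1,\dots,\Lambda_L$. Let $\epsilon_1,\dots,\epsilon_{L_B}$ be the distinct values among the $\Lambda_k$, $\epsilon_j$ occurring $g_j$ times, and assume $\epsilon_1,\dots,\epsilon_{L_B}$ are linearly independent over $\mathbb Q$. Let $\chi(t)=\operatorname{tr}(e^{-itH})$. Then for every $M\in\mathbb N$, $$\overline{|\chi(t)|^{2M}}=\prod_{j=1}^{L_B}\binom{2g_jM}{g_jM}.$$
   Context: $\overline{f(t)}:=\lim_{T\to\infty}\frac1T\int_0^Tf(t)\,dt$. *)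

theory Defs
  imports "HOL-Analysis.Analysis"
begin

definition occ :: "nat \<Rightarrow> (nat \<Rightarrow> nat) set" where
  "occ L = ({1..L} \<rightarrow>\<^sub>E {0, 1})"

definition energy :: "nat \<Rightarrow> real \<Rightarrow> (nat \<Rightarrow> real) \<Rightarrow> (nat \<Rightarrow> nat) \<Rightarrow> real" where
  "energy L E0 \<Lambda> n = E0 + (\<Sum>k=1..L. real (n k) * \<Lambda> k)"

text \<open>chi(t) = tr(exp(-itH)) = sum over the spectrum (with multiplicity) of exp(-i t E_n).\<close>
definition chi :: "nat \<Rightarrow> real \<Rightarrow> (nat \<Rightarrow> real) \<Rightarrow> real \<Rightarrow> complex" where
  "chi L E0 \<Lambda> t = (\<Sum>n\<in>occ L. exp (- \<i> * of_real t * of_real (energy L E0 \<Lambda> n)))"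

definition rat_lin_indep :: "real set \<Rightarrow> bool" where
  "rat_lin_indep V \<longleftrightarrow>
     (\<forall>q :: real \<Rightarrow> rat. (\<Sum>x\<in>V. of_rat (q x) * x) = 0 \<longrightarrow> (\<forall>x\<in>V. q x = 0))"

definition mult_of :: "nat \<Rightarrow> (nat \<Rightarrow> real) \<Rightarrow> real \<Rightarrow> nat" where
  "mult_of L \<Lambda> e = card {k \<in> {1..L}. \<Lambda> k = e}"

end

theory Submission
  imports Defs
begin


lemma chi_prod:
  "chi L E0 \<Lambda> t = exp (- \<i> * of_real t * of_real E0) * (\<Prod>k\<in>{1..L}. (1 + exp (- \<i> * of_real (t * \<Lambda> k))))"
proof -
  have "(\<Prod>k\<in>{1..L}. (1 + exp (- \<i> * of_real (t * \<Lambda> k)))) =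
        (\<Prod>k\<in>{1..L}. \<Sum>b\<in>{0::nat,1}. exp (- \<i> * of_real (t * real b * \<Lambda> k)))"
    by (intro prod.cong refl) auto
  also have "\<dots> = (\<Sum>n\<in>occ L. \<Prod>k\<in>{1..L}. exp (- \<i> * of_real (t * real (n k) * \<Lambda> k)))"
    unfolding occ_def by (rule prod_sum_PiE) auto
  finally have *: "(\<Prod>k\<in>{1..L}. (1 + exp (- \<i> * of_real (t * \<Lambda> k)))) = \<dots>" .
  show ?thesis
    unfolding chi_def * sum_distrib_left energy_def
  proof (intro sum.cong refl)
    fix n
    have "exp (- \<i> * of_real t * of_real (E0 + (\<Sum>k = 1..L. real (n k) * \<Lambda> k)))
        = exp (- \<i> * of_real t * of_real E0 + (\<Sum>k = 1..L. - \<i> * of_real (t * real (n k) * \<Lambda> k)))"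
      by (simp add: sum_distrib_left algebra_simps)
    also have "\<dots> = exp (- \<i> * of_real t * of_real E0) * (\<Prod>k = 1..L. exp (- \<i> * of_real (t * real (n k) * \<Lambda> k)))"
      by (subst exp_add, subst exp_sum) auto
    finally show "exp (- \<i> * of_real t * of_real (E0 + (\<Sum>k = 1..L. real (n k) * \<Lambda> k))) = \<dots>" .
  qed
qed

lemma cmod_one_exp: "(cmod (1 + exp (- \<i> * of_real x)))^2 = 2 + 2 * cos x"
proof -
  have "exp (- \<i> * of_real x) = cis (-x)"
    by (simp add: cis_conv_exp)
  then show ?thesis
    unfolding cmod_power2 using sin_cos_squared_add[of x] by (simp add: power2_eq_square algebra_simps)
qed

lemma cmod_chi_sq:
  "(cmod (chi L E0 \<Lambda> t))^2 = (\<Prod>k\<in>{1..L}. 2 + 2 * cos (t * \<Lambda> k))"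
proof -
  have "cmod (exp (- \<i> * of_real t * of_real E0)) = 1"
  proof -
    have "- \<i> * of_real t * of_real E0 = \<i> * of_real (-(t*E0))" by simp
    then show ?thesis by (simp only: norm_exp_i_times)
  qed
  then have "(cmod (chi L E0 \<Lambda> t))^2 = (\<Prod>k\<in>{1..L}. (cmod (1 + exp (- \<i> * of_real (t * \<Lambda> k))))^2)"
    by (simp add: chi_prod norm_mult prod_norm[symmetric] power_mult_distrib prod_power_distrib)
  then show ?thesis by (simp only: cmod_one_exp)
qed

lemma prod_group:
  fixes h :: "real \<Rightarrow> 'a::comm_monoid_mult"
  shows "(\<Prod>k\<in>{1..L}. h (\<Lambda> k)) = (\<Prod>e\<in>\<Lambda> ` {1..L}. h e ^ mult_of L \<Lambda> e)"
proof -
  have "(\<Prod>k\<in>{1..L}. h (\<Lambda> k)) = (\<Prod>e\<in>\<Lambda> ` {1..L}. \<Prod>k\<in>{k \<in> {1..L}. \<Lambda> k = e}. h (\<Lambda> k))"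
    by (rule prod.image_gen) auto
  also have "\<dots> = (\<Prod>e\<in>\<Lambda> ` {1..L}. h e ^ mult_of L \<Lambda> e)"
    unfolding mult_of_def by (intro prod.cong refl) simp
  finally show ?thesis .
qed

lemma cos_expand:
  "complex_of_real ((2 + 2 * cos x) ^ n) =
    (\<Sum>j\<le>2*n. of_nat ((2*n) choose j) * exp (\<i> * of_real (x * (real j - real n))))"
proof -
  define a where "a = exp (\<i> * of_real (x/2))"
  define b where "b = exp (- \<i> * of_real (x/2))"
  have "complex_of_real (2 + 2 * cos x) = (a + b)^2"
  proof -
    have "(a+b)^2 = a*a + b*b + 2*(a*b)" by (simp add: power2_eq_square algebra_simps)
    also have "a*b = 1" unfolding a_def b_def by (simp add: exp_minus)
    also have "a*a = exp (\<i> * of_real x)" unfolding a_def by (simp flip: exp_add)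
    also have "b*b = exp (- (\<i> * of_real x))" unfolding b_def by (simp flip: exp_add)
    finally show ?thesis by (simp add: cos_exp_eq[of "of_real x", simplified cos_of_real] field_simps)
  qed
  then have "complex_of_real ((2 + 2 * cos x) ^ n) = (a+b)^(2*n)"
    by (simp add: power_mult)
  also have "\<dots> = (\<Sum>j\<le>2*n. of_nat ((2*n) choose j) * a^j * b^(2*n-j))"
    by (rule binomial_ring)
  also have "\<dots> = (\<Sum>j\<le>2*n. of_nat ((2*n) choose j) * exp (\<i> * of_real (x * (real j - real n))))"
  proof (intro sum.cong refl)
    fix j assume "j \<in> {..2*n}"
    then have "j \<le> 2*n" by simp
    have "a^j * b^(2*n-j) = exp (of_nat j * (\<i> * of_real (x/2)) + of_nat (2*n-j) * (- \<i> * of_real (x/2)))"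
      unfolding a_def b_def exp_add exp_of_nat_mult by simp
    also have "of_nat j * (\<i> * of_real (x/2)) + of_nat (2*n-j) * (- \<i> * of_real (x/2))
        = \<i> * of_real (x * (real j - real n))"
      using \<open>j \<le> 2*n\<close> by (simp add: of_nat_diff field_simps)
    finally show "of_nat ((2*n) choose j) * a^j * b^(2*n-j) = of_nat ((2*n) choose j) * exp (\<i> * of_real (x * (real j - real n)))"
      by (simp add: mult.assoc)
  qed
  finally show ?thesis .
qed

definition NN :: "nat \<Rightarrow> (nat \<Rightarrow> real) \<Rightarrow> nat \<Rightarrow> real \<Rightarrow> nat" where
  "NN L \<Lambda> M e = mult_of L \<Lambda> e * M"

definition om :: "real set \<Rightarrow> (real \<Rightarrow> nat) \<Rightarrow> (real \<Rightarrow> nat) \<Rightarrow> real" where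
  "om V N p = (\<Sum>e\<in>V. (real (p e) - real (N e)) * e)"

lemma expansion:
  fixes L M :: nat and E0 t :: real and \<Lambda> :: "nat \<Rightarrow> real"
  defines "V \<equiv> \<Lambda> ` {1..L}" and "N \<equiv> NN L \<Lambda> M"
  shows "complex_of_real (cmod (chi L E0 \<Lambda> t) ^ (2 * M)) =
    (\<Sum>p\<in>PiE V (\<lambda>e. {..2 * N e}). of_real (\<Prod>e\<in>V. real ((2 * N e) choose p e)) * exp (\<i> * of_real (t * om V N p)))"
proof -
  have fin: "finite V" unfolding V_def by simp
  have "cmod (chi L E0 \<Lambda> t) ^ (2 * M) = ((cmod (chi L E0 \<Lambda> t))^2)^M"
    by (simp add: power_mult)
  also have "\<dots> = (\<Prod>e\<in>V. (2 + 2 * cos (t * e)) ^ N e)"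
    unfolding cmod_chi_sq prod_group[of "\<lambda>e. 2 + 2 * cos (t * e)"] V_def N_def NN_def
    by (simp add: prod_power_distrib power_mult)
  finally have "complex_of_real (cmod (chi L E0 \<Lambda> t) ^ (2 * M)) =
      (\<Prod>e\<in>V. complex_of_real ((2 + 2 * cos (t * e)) ^ N e))" by simp
  also have "\<dots> = (\<Prod>e\<in>V. \<Sum>j\<le>2*N e. of_nat ((2*N e) choose j) * exp (\<i> * of_real (t * e * (real j - real (N e)))))"
    by (simp only: cos_expand)
  also have "\<dots> = (\<Sum>p\<in>PiE V (\<lambda>e. {..2 * N e}). \<Prod>e\<in>V. of_nat ((2*N e) choose p e) * exp (\<i> * of_real (t * e * (real (p e) - real (N e)))))"
    by (rule prod_sum_PiE[OF fin]) auto
  also have "\<dots> = (\<Sum>p\<in>PiE V (\<lambda>e. {..2 * N e}). of_real (\<Prod>e\<in>V. real ((2 * N e) choose p e)) * exp (\<i> * of_real (t * om V N p)))"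
  proof (intro sum.cong refl)
    fix p
    have "(\<Prod>e\<in>V. exp (\<i> * of_real (t * e * (real (p e) - real (N e))))) = exp (\<Sum>e\<in>V. \<i> * of_real (t * e * (real (p e) - real (N e))))"
      by (simp add: exp_sum fin)
    also have "(\<Sum>e\<in>V. \<i> * of_real (t * e * (real (p e) - real (N e)))) = \<i> * of_real (t * om V N p)"
      unfolding om_def sum_distrib_left of_real_sum by (intro sum.cong refl) (simp add: algebra_simps)
    finally show "(\<Prod>e\<in>V. of_nat ((2*N e) choose p e) * exp (\<i> * of_real (t * e * (real (p e) - real (N e))))) =
        of_real (\<Prod>e\<in>V. real ((2 * N e) choose p e)) * exp (\<i> * of_real (t * om V N p))"
      by (simp add: prod.distrib)
  qed
  finally show ?thesis .
qed

lemma om_zero: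
  assumes indep: "rat_lin_indep V" and fin: "finite V"
    and p: "p \<in> PiE V B" and z: "om V N p = 0"
  shows "p = restrict N V"
proof -
  define q where "q e = (of_nat (p e) - of_nat (N e) :: rat)" for e
  have "(\<Sum>x\<in>V. of_rat (q x) * x) = om V N p"
    unfolding om_def q_def by (simp add: of_rat_diff)
  with z have "(\<Sum>x\<in>V. of_rat (q x) * x) = 0" by simp
  with indep have "\<forall>x\<in>V. q x = 0" unfolding rat_lin_indep_def by (elim allE[of _ q]) simp
  then have "\<forall>x\<in>V. p x = N x" unfolding q_def by simp
  with p show ?thesis
    by (intro ext) (auto simp: PiE_def extensional_def)
qed

definition JJ :: "real \<Rightarrow> real \<Rightarrow> complex" where
  "JJ w T = (if w = 0 then of_real T else (exp (\<i> * of_real (T * w)) - 1) / (\<i> * of_real w))"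

lemma exp_integral:
  assumes "0 \<le> T"
  shows "((\<lambda>t. exp (\<i> * of_real (t * w))) has_integral JJ w T) {0..T}"
proof (cases "w = 0")
  case True
  then show ?thesis using has_integral_const_real[of "1::complex" 0 T] assms
    by (simp add: JJ_def scaleR_conv_of_real)
next
  case False
  have "((\<lambda>t. exp (\<i> * of_real (t * w))) has_integral
      (exp (\<i> * of_real (T * w)) / (\<i> * of_real w) - exp (\<i> * of_real (0 * w)) / (\<i> * of_real w))) {0..T}"
  proof (rule fundamental_theorem_of_calculus[OF assms])
    fix x assume "x \<in> {0..T}"
    have "((\<lambda>z. exp (\<i> * z * of_real w) / (\<i> * of_real w)) has_field_derivative
       exp (\<i> * of_real x * of_real w)) (at (of_real x))"
      using False by (auto intro!: derivative_eq_intros simp: field_simps)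
    from has_vector_derivative_real_field[OF this]
    show "((\<lambda>t. exp (\<i> * of_real (t * w)) / (\<i> * of_real w)) has_vector_derivative exp (\<i> * of_real (x * w))) (at x within {0..T})"
      by (simp add: mult.assoc)
  qed
  then show ?thesis using False by (simp add: JJ_def diff_divide_distrib)
qed

lemma JJ_lim:
  "((\<lambda>T. of_real (1/T) * JJ w T) \<longlongrightarrow> (if w = 0 then 1 else 0)) at_top"
proof (cases "w = 0")
  case True
  have "eventually (\<lambda>T. of_real (1/T) * JJ w T = 1) at_top"
    using eventually_gt_at_top[of 0] by eventually_elim (simp add: JJ_def True flip: of_real_mult)
  then show ?thesis using True by (simp add: tendsto_eventually)
next
  case False
  have "((\<lambda>T. of_real (1/T) * JJ w T) \<longlongrightarrow> 0) at_top"
  proof (rule Lim_null_comparison)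
    show "eventually (\<lambda>T. norm (of_real (1/T) * JJ w T) \<le> (2 / \<bar>w\<bar>) / T) at_top"
      using eventually_gt_at_top[of 0]
    proof eventually_elim
      case (elim T)
      have "norm (exp (\<i> * of_real (T * w)) - 1) \<le> norm (exp (\<i> * of_real (T * w))) + norm (1::complex)"
        by (rule norm_triangle_ineq4)
      also have "\<dots> = 2" by (simp add: norm_exp_i_times)
      finally have "norm (exp (\<i> * of_real (T * w)) - 1) \<le> 2" .
      then show ?case using False elim
        by (simp add: JJ_def norm_mult norm_divide field_simps)
    qed
    show "((\<lambda>T. (2 / \<bar>w\<bar>) / T) \<longlongrightarrow> 0) at_top"
      by (intro tendsto_divide_0[OF tendsto_const] filterlim_at_top_imp_at_infinity filterlim_ident)
  qed
  then show ?thesis using False by simp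
qed

theorem theorem6:
  fixes L M :: nat and E0 :: real and \<Lambda> :: "nat \<Rightarrow> real"
  assumes "rat_lin_indep (\<Lambda> ` {1..L})"
  shows "((\<lambda>T. (1 / T) * integral {0..T} (\<lambda>t. cmod (chi L E0 \<Lambda> t) ^ (2 * M)))
          \<longlongrightarrow> (\<Prod>e\<in>\<Lambda> ` {1..L}. real ((2 * mult_of L \<Lambda> e * M) choose (mult_of L \<Lambda> e * M))))
         at_top"
proof -
  define V where "V = \<Lambda> ` {1..L}"
  define N where "N = NN L \<Lambda> M"
  define P where "P = PiE V (\<lambda>e. {..2 * N e})"
  define C where "C p = (\<Prod>e\<in>V. real ((2 * N e) choose p e))" for p
  define f where "f t = cmod (chi L E0 \<Lambda> t) ^ (2 * M)" for t
  define G where "G T = (\<Sum>p\<in>P. of_real (C p) * JJ (om V N p) T)" for T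
  define p0 where "p0 = restrict N V"
  have fin: "finite V" unfolding V_def by simp
  have finP: "finite P" unfolding P_def using fin by (simp add: finite_PiE)
  have exp_eq: "complex_of_real (f t) = (\<Sum>p\<in>P. of_real (C p) * exp (\<i> * of_real (t * om V N p)))" for t
    unfolding f_def P_def C_def V_def N_def by (rule expansion)
  have int_eq: "integral {0..T} f = Re (G T)" if "0 \<le> T" for T
  proof -
    have "((\<lambda>t. \<Sum>p\<in>P. of_real (C p) * exp (\<i> * of_real (t * om V N p))) has_integral G T) {0..T}"
      unfolding G_def
      by (intro has_integral_sum[OF finP] has_integral_mult_right exp_integral that)
    then have "((\<lambda>t. complex_of_real (f t)) has_integral G T) {0..T}"
      by (simp only: exp_eq)
    from has_integral_Re[OF this] have "(f has_integral Re (G T)) {0..T}" by simp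
    then show ?thesis by (rule integral_unique)
  qed
  have p0P: "p0 \<in> P" unfolding p0_def P_def by auto
  have lim: "((\<lambda>T. of_real (1/T) * G T) \<longlongrightarrow> (\<Sum>p\<in>P. of_real (C p) * (if om V N p = 0 then 1 else 0))) at_top"
  proof -
    have "(\<lambda>T. of_real (1/T) * G T) = (\<lambda>T. \<Sum>p\<in>P. of_real (C p) * (of_real (1/T) * JJ (om V N p) T))"
      unfolding G_def sum_distrib_left by (simp add: mult.left_commute)
    moreover have "((\<lambda>T. \<Sum>p\<in>P. of_real (C p) * (of_real (1/T) * JJ (om V N p) T)) \<longlongrightarrow>
        (\<Sum>p\<in>P. of_real (C p) * (if om V N p = 0 then 1 else 0))) at_top"
      by (intro tendsto_sum tendsto_mult[OF tendsto_const] JJ_lim)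
    ultimately show ?thesis by simp
  qed
  have "(\<Sum>p\<in>P. of_real (C p) * (if om V N p = 0 then 1 else 0)) = (\<Sum>p\<in>P. if p = p0 then complex_of_real (C p) else 0)"
  proof (intro sum.cong refl)
    fix p assume "p \<in> P"
    have "om V N p = 0 \<longleftrightarrow> p = p0"
    proof
      assume "om V N p = 0"
      then show "p = p0" unfolding p0_def
        using om_zero[OF assms[folded V_def] fin \<open>p \<in> P\<close>[unfolded P_def]] by simp
    next
      assume "p = p0"
      then show "om V N p = 0" unfolding om_def p0_def by simp
    qed
    then show "of_real (C p) * (if om V N p = 0 then 1 else 0) = (if p = p0 then complex_of_real (C p) else 0)"
      by simp
  qed
  also have "\<dots> = of_real (C p0)" using finP p0P by simp
  finally have lim2: "((\<lambda>T. of_real (1/T) * G T) \<longlongrightarrow> of_real (C p0)) at_top"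
    using lim by simp
  have "((\<lambda>T. (1/T) * Re (G T)) \<longlongrightarrow> C p0) at_top"
    using tendsto_Re[OF lim2] by simp
  moreover have "eventually (\<lambda>T. (1/T) * Re (G T) = (1/T) * integral {0..T} f) at_top"
    using eventually_ge_at_top[of 0] by eventually_elim (simp add: int_eq)
  ultimately have "((\<lambda>T. (1/T) * integral {0..T} f) \<longlongrightarrow> C p0) at_top"
    by (rule Lim_transform_eventually)
  moreover have "C p0 = (\<Prod>e\<in>\<Lambda> ` {1..L}. real ((2 * mult_of L \<Lambda> e * M) choose (mult_of L \<Lambda> e * M)))"
    unfolding C_def p0_def V_def N_def NN_def by (intro prod.cong refl) (simp add: mult.assoc)
  ultimately show ?thesis unfolding f_def by simp
qed

end
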